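(* Let $s$ be a node and let $U$ be a nonempty set of neighbors of $s$ in the communication graph $G$ (the "unexplored neighbors" of $s$), and let $m=|U|$. Suppose procedure ESUN is run with $s$ as initiator, with only the nodes of $U$ transmitting during it. Then, for appropriately chosen constants $d$ and $\epsilon'$ in the procedure, the upper bound $x$ declared by $s$ satisfies $m\le x\le 16m$ with high probability.
   Context: Model: $n$ nodes in the Euclidean plane with unique names in $\{1,\dots,N\}$, $N\ge n$ ($N$ a power of 2); synchronous rounds, each node transmits or listens in each round, no collision detection. Uniform power $P$, parameters $\alpha>2$, $\mathcal{N}>0$, $\beta\ge1$, $\varepsilon\in(0,1)$, $r=(P/(\mathcal{N}\beta))^{1/\alpha}$. If set $\mathcal{T}$ transmits, $u\notin\mathcal{T}$ receives the message of $v\in\mathcal{T}$ iff $\frac{P\,\mathrm{dist}(v,u)^{-\alpha}}{\mathcal{N}+\sum_{w\in\mathcal{T}\setminus\{v\}}P\,\mathrm{dist}(w,u)^{-\alpha}}\ge\beta$ and $\mathrm{dist}(v,u)\le(1-\varepsilon)r$. Communication graph $G$: $u,v$ adjacent iff $\mathrm{dist}(u,v)\le(1-\varepsilon)r$. Procedure ESUN (Estimate the Size of the Unexplored Neighborhood), initiated by $s$: Stage 1 consists of $\log N$ sub-stages; in sub-stage $i$ ($i=1,\dots,\log N$), for $d\log N$ rounds, each node of $U$ independently transmits in each round with probability $1/2^i$, while $s$ listens; let $n_i$ be the number of rounds of sub-stage $i$ in which $s$ successfully receives a message. Stage 2: let $k$ be the largest $i$ with $n_i\ge \frac{d\log N}{8}(1-\epsilon')$;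 $s$ declares $x=2^k$ as an upper bound on the size of its unexplored neighborhood. "With high probability" means with probability at least $1-n^{-d''}$ for a sufficiently large constant $d''\ge1$. *)

theory Defs
  imports "HOL-Probability.Probability"
begin

definition sinr_range :: "real \<Rightarrow> real \<Rightarrow> real \<Rightarrow> real \<Rightarrow> real" where
  "sinr_range P alpha noise beta = (P / (noise * beta)) powr (1 / alpha)"

definition sinr_receives ::
  "real \<Rightarrow> real \<Rightarrow> real \<Rightarrow> real \<Rightarrow> real \<Rightarrow> (nat \<Rightarrow> real^2) \<Rightarrow> nat set \<Rightarrow> nat \<Rightarrow> nat \<Rightarrow> bool" where
  "sinr_receives P alpha noise beta eps pos T v u \<longleftrightarrow>
     v \<in> T \<and> u \<notin> T \<and>
     P * dist (pos v) (pos u) powr (- alpha)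
       / (noise + (\<Sum>w\<in>T - {v}. P * dist (pos w) (pos u) powr (- alpha))) \<ge> beta \<and>
     dist (pos v) (pos u) \<le> (1 - eps) * sinr_range P alpha noise beta"

definition receives_some ::
  "real \<Rightarrow> real \<Rightarrow> real \<Rightarrow> real \<Rightarrow> real \<Rightarrow> (nat \<Rightarrow> real^2) \<Rightarrow> nat set \<Rightarrow> nat \<Rightarrow> bool" where
  "receives_some P alpha noise beta eps pos T u \<longleftrightarrow>
     (\<exists>v\<in>T. sinr_receives P alpha noise beta eps pos T v u)"

text \<open>Random choices of ESUN: omega (i, j, u) says whether node u transmits in round j
of sub-stage i; independently with probability 1/2^i, for i in 1..L (L = log N),
j < d*L, u in U.\<close>
definition esun_coins :: "nat \<Rightarrow> nat \<Rightarrow> nat set \<Rightarrow> (nat \<times> nat \<times> nat \<Rightarrow> bool) pmf" where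
  "esun_coins L d U =
     Pi_pmf ({1..L} \<times> {..<d * L} \<times> U) False (\<lambda>(i, j, u). bernoulli_pmf (1 / 2 ^ i))"

definition esun_count ::
  "real \<Rightarrow> real \<Rightarrow> real \<Rightarrow> real \<Rightarrow> real \<Rightarrow> (nat \<Rightarrow> real^2) \<Rightarrow> nat \<Rightarrow> nat \<Rightarrow> nat set \<Rightarrow> nat
    \<Rightarrow> (nat \<times> nat \<times> nat \<Rightarrow> bool) \<Rightarrow> nat \<Rightarrow> nat" where
  "esun_count P alpha noise beta eps pos L d U s omega i =
     card {j. j < d * L \<and> receives_some P alpha noise beta eps pos {u \<in> U. omega (i, j, u)} s}"

definition esun_estimate ::
  "real \<Rightarrow> real \<Rightarrow> real \<Rightarrow> real \<Rightarrow> real \<Rightarrow> (nat \<Rightarrow> real^2) \<Rightarrow> nat \<Rightarrow> nat \<Rightarrow> real \<Rightarrow> nat set \<Rightarrow> nat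
    \<Rightarrow> (nat \<times> nat \<times> nat \<Rightarrow> bool) \<Rightarrow> nat option" where
  "esun_estimate P alpha noise beta eps pos L d eps' U s omega =
     (let Q = {i \<in> {1..L}. real (esun_count P alpha noise beta eps pos L d U s omega i)
                             \<ge> real (d * L) / 8 * (1 - eps')}
      in if Q = {} then None else Some (2 ^ Max Q))"

end

theory Submission
  imports Defs "HOL-Library.Discrete_Functions"
begin

lemma Pi_pmf_curry:
  assumes A: "finite A" and B: "finite B"
  shows "map_pmf (\<lambda>w a b. w (a,b)) (Pi_pmf (A \<times> B) d (\<lambda>(a,b). q a b))
         = Pi_pmf A (\<lambda>_. d) (\<lambda>a. Pi_pmf B d (q a))"
proof (rule pmf_eqI)
  fix F :: "'a \<Rightarrow> 'b \<Rightarrow> 'c"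
  have inj: "inj (\<lambda>(w::'a\<times>'b\<Rightarrow>'c) a b. w (a,b))"
    by (auto simp: inj_def fun_eq_iff)
  have F: "F = (\<lambda>w a b. w (a,b)) (\<lambda>x. F (fst x) (snd x))" by simp
  have "pmf (map_pmf (\<lambda>w a b. w (a,b)) (Pi_pmf (A \<times> B) d (\<lambda>(a,b). q a b))) F
      = pmf (Pi_pmf (A \<times> B) d (\<lambda>(a,b). q a b)) (\<lambda>x. F (fst x) (snd x))"
    by (subst F, subst pmf_map_inj'[OF inj]) simp
  also have "\<dots> = pmf (Pi_pmf A (\<lambda>_. d) (\<lambda>a. Pi_pmf B d (q a))) F"
  proof (cases "\<forall>a b. (a,b) \<notin> A \<times> B \<longrightarrow> F a b = d")
    case True
    then have "\<forall>a. a \<notin> A \<longrightarrow> F a = (\<lambda>_. d)" by auto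
    moreover have "\<forall>a\<in>A. \<forall>b. b \<notin> B \<longrightarrow> F a b = d" using True by auto
    ultimately show ?thesis using True A B
      by (simp add: pmf_Pi prod.cartesian_product[of "\<lambda>a b. pmf (q a b) (F a b)"] case_prod_unfold)
  next
    case False
    then obtain a b where ab: "(a,b) \<notin> A \<times> B" "F a b \<noteq> d" by auto
    have l: "pmf (Pi_pmf (A \<times> B) d (\<lambda>(a,b). q a b)) (\<lambda>x. F (fst x) (snd x)) = 0"
      using ab A B by (subst pmf_Pi) auto
    show ?thesis
    proof (cases "a \<in> A")
      case True
      with ab have "b \<notin> B" by auto
      then have "pmf (Pi_pmf B d (q a)) (F a) = 0" using ab B by (subst pmf_Pi) auto
      then show ?thesis using l A True by (simp add: pmf_Pi prod_zero_iff) blast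
    next
      case False
      then show ?thesis using l A ab by (subst pmf_Pi) (auto simp: fun_eq_iff)
    qed
  qed
  finally show "pmf (map_pmf (\<lambda>w a b. w (a,b)) (Pi_pmf (A \<times> B) d (\<lambda>(a,b). q a b))) F
      = pmf (Pi_pmf A (\<lambda>_. d) (\<lambda>a. Pi_pmf B d (q a))) F" .
qed

lemma esun_marg:
  assumes i: "i \<in> {1..L}" and U: "finite U"
  shows "map_pmf (\<lambda>\<omega> j u. \<omega> (i,j,u)) (esun_coins L d U)
       = Pi_pmf {..<d*L} (\<lambda>_. False) (\<lambda>_. Pi_pmf U False (\<lambda>_. bernoulli_pmf (1 / 2 ^ i)))"
proof -
  let ?J = "{..<d*L}"
  have e: "esun_coins L d U = Pi_pmf ({1..L} \<times> (?J \<times> U)) False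
       (\<lambda>(a,b). (\<lambda>i (x::nat\<times>nat). bernoulli_pmf (1 / 2 ^ i)) a b)"
    unfolding esun_coins_def by (intro arg_cong[where f="Pi_pmf _ _"]) (auto simp: fun_eq_iff)
  have 1: "map_pmf (\<lambda>w a b. w (a,b)) (esun_coins L d U)
        = Pi_pmf {1..L} (\<lambda>_. False) (\<lambda>i. Pi_pmf (?J \<times> U) False (\<lambda>_. bernoulli_pmf (1 / 2 ^ i)))"
    unfolding e using U by (intro Pi_pmf_curry) auto
  have 2: "map_pmf (\<lambda>W. W i) (Pi_pmf {1..L} (\<lambda>_. False) (\<lambda>i. Pi_pmf (?J \<times> U) False (\<lambda>_. bernoulli_pmf (1 / 2 ^ i))))
        = Pi_pmf (?J \<times> U) False (\<lambda>_. bernoulli_pmf (1 / 2 ^ i))"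
    using i by (subst Pi_pmf_component) auto
  have 3: "map_pmf (\<lambda>w a b. w (a,b)) (Pi_pmf (?J \<times> U) False (\<lambda>(a,b). (\<lambda>j (u::nat). bernoulli_pmf (1 / 2 ^ i)) a b))
        = Pi_pmf ?J (\<lambda>_. False) (\<lambda>a. Pi_pmf U False (\<lambda>_. bernoulli_pmf (1 / 2 ^ i)))"
    using U by (intro Pi_pmf_curry) auto
  have 4: "(\<lambda>(a,b). (\<lambda>j (u::nat). bernoulli_pmf (1 / 2 ^ i)) a b) = (\<lambda>_::nat\<times>nat. bernoulli_pmf (1 / 2 ^ i))"
    by auto
  have "map_pmf (\<lambda>\<omega> j u. \<omega> (i,j,u)) (esun_coins L d U)
     = map_pmf (\<lambda>w a b. w (a,b)) (map_pmf (\<lambda>W. W i) (map_pmf (\<lambda>w a b. w (a,b)) (esun_coins L d U)))"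
    by (simp add: pmf.map_comp o_def)
  also have "\<dots> = Pi_pmf ?J (\<lambda>_. False) (\<lambda>a. Pi_pmf U False (\<lambda>_. bernoulli_pmf (1 / 2 ^ i)))"
    unfolding 1 2 using 3 unfolding 4 .
  finally show ?thesis .
qed

lemma bool_pmf_bernoulli: "(M :: bool pmf) = bernoulli_pmf (measure_pmf.prob M {True})"
proof (rule pmf_eqI)
  fix b :: bool
  have le: "measure_pmf.prob M {True} \<in> {0..1}" by auto
  have c: "UNIV - {True} = {False}" by auto
  have s: "measure_pmf.prob M {False} = 1 - measure_pmf.prob M {True}"
    using measure_pmf.prob_compl[of "{True}" M] by (simp add: c)
  show "pmf M b = pmf (bernoulli_pmf (measure_pmf.prob M {True})) b"
    using le s by (cases b) (auto simp: measure_pmf_single)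
qed

definition succ_prob where
  "succ_prob P alpha noise beta eps pos U s i =
     measure_pmf.prob (Pi_pmf U False (\<lambda>_. bernoulli_pmf (1 / 2 ^ i)))
       {F. receives_some P alpha noise beta eps pos {u \<in> U. F u} s}"

lemma esun_count_binomial:
  assumes i: "i \<in> {1..L}" and U: "finite U"
  shows "map_pmf (\<lambda>\<omega>. esun_count P alpha noise beta eps pos L d U s \<omega> i) (esun_coins L d U)
       = binomial_pmf (d*L) (succ_prob P alpha noise beta eps pos U s i)"
proof -
  let ?J = "{..<d*L}"
  define g where "g F = receives_some P alpha noise beta eps pos {u \<in> U. F u} s" for F
  let ?PU = "Pi_pmf U False (\<lambda>_. bernoulli_pmf (1 / 2 ^ i))"
  have bern: "map_pmf g ?PU = bernoulli_pmf (succ_prob P alpha noise beta eps pos U s i)"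
    by (subst bool_pmf_bernoulli) (simp add: succ_prob_def g_def vimage_def)
  have "map_pmf (\<lambda>\<omega>. esun_count P alpha noise beta eps pos L d U s \<omega> i) (esun_coins L d U)
     = map_pmf (\<lambda>H. card {j\<in>?J. H j}) (map_pmf (\<lambda>H. g \<circ> H) (map_pmf (\<lambda>\<omega> j u. \<omega> (i,j,u)) (esun_coins L d U)))"
    by (simp add: pmf.map_comp o_def esun_count_def g_def)
  also have "map_pmf (\<lambda>H. g \<circ> H) (map_pmf (\<lambda>\<omega> j u. \<omega> (i,j,u)) (esun_coins L d U))
     = Pi_pmf ?J (g (\<lambda>_. False)) (\<lambda>_. map_pmf g ?PU)"
    unfolding esun_marg[OF i U] by (subst Pi_pmf_map) auto
  also have "\<dots> = Pi_pmf ?J (g (\<lambda>_. False)) (\<lambda>_. bernoulli_pmf (succ_prob P alpha noise beta eps pos U s i))"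
    by (simp add: bern)
  also have "map_pmf (\<lambda>H. card {j\<in>?J. H j}) \<dots> = binomial_pmf (d*L) (succ_prob P alpha noise beta eps pos U s i)"
    by (rule binomial_pmf_altdef'[symmetric]) (auto simp: succ_prob_def)
  finally show ?thesis .
qed

lemma succ_prob_upper:
  fixes p :: real
  assumes U: "finite U" and p: "p \<in> {0..1}"
  shows "measure_pmf.prob (Pi_pmf U False (\<lambda>_. bernoulli_pmf p))
           {F. receives_some P alpha noise beta eps pos {u \<in> U. F u} s} \<le> card U * p"
proof -
  let ?M = "Pi_pmf U False (\<lambda>_. bernoulli_pmf p)"
  have sub: "{F. receives_some P alpha noise beta eps pos {u \<in> U. F u} s} \<subseteq> (\<Union>u\<in>U. {F. F u})"
    by (auto simp: receives_some_def)
  have comp: "measure_pmf.prob ?M {F. F u} = p" if "u \<in> U" for u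
  proof -
    have "measure_pmf.prob ?M {F. F u} = measure_pmf.prob (map_pmf (\<lambda>F. F u) ?M) {True}"
      by (simp add: vimage_def)
    also have "map_pmf (\<lambda>F. F u) ?M = bernoulli_pmf p"
      using that U by (subst Pi_pmf_component) auto
    finally show ?thesis using p by (simp add: measure_pmf_single)
  qed
  have "measure_pmf.prob ?M {F. receives_some P alpha noise beta eps pos {u \<in> U. F u} s}
      \<le> measure_pmf.prob ?M (\<Union>u\<in>U. {F. F u})"
    by (rule measure_pmf.finite_measure_mono[OF sub]) simp
  also have "\<dots> \<le> (\<Sum>u\<in>U. measure_pmf.prob ?M {F. F u})"
    by (rule measure_pmf.finite_measure_subadditive_finite) (use U in auto)
  also have "\<dots> = card U * p" using comp by simp
  finally show ?thesis .
qed

lemma succ_prob_lower: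
  fixes p :: real
  assumes U: "finite U" and p: "p \<in> {0..1}"
    and one: "\<And>u. u \<in> U \<Longrightarrow> receives_some P alpha noise beta eps pos {u} s"
  shows "measure_pmf.prob (Pi_pmf U False (\<lambda>_. bernoulli_pmf p))
           {F. receives_some P alpha noise beta eps pos {u \<in> U. F u} s} \<ge> card U * p * (1 - p) ^ (card U - 1)"
proof -
  let ?M = "Pi_pmf U False (\<lambda>_. bernoulli_pmf p)"
  define E where "E u = Pi U (\<lambda>v. if v = u then {True} else {False})" for u
  have sub: "(\<Union>u\<in>U. E u) \<subseteq> {F. receives_some P alpha noise beta eps pos {u \<in> U. F u} s}"
  proof
    fix F assume "F \<in> (\<Union>u\<in>U. E u)"
    then obtain u where u: "u \<in> U" "F \<in> E u" by auto
    then have "{v \<in> U. F v} = {u}" by (auto simp: E_def Pi_def split: if_splits)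
    then show "F \<in> {F. receives_some P alpha noise beta eps pos {u \<in> U. F u} s}"
      using one[OF u(1)] by simp
  qed
  have bT: "measure_pmf.prob (bernoulli_pmf p) {True} = p" using p by (simp add: measure_pmf_single)
  have bF: "measure_pmf.prob (bernoulli_pmf p) {False} = 1 - p" using p by (simp add: measure_pmf_single)
  have pE: "measure_pmf.prob ?M (E u) = p * (1 - p) ^ (card U - 1)" if u: "u \<in> U" for u
  proof -
    have "measure_pmf.prob ?M (E u) = (\<Prod>v\<in>U. measure_pmf.prob (bernoulli_pmf p) (if v = u then {True} else {False}))"
      unfolding E_def using U by (rule measure_Pi_pmf_Pi)
    also have "\<dots> = (\<Prod>v\<in>U. if v = u then p else 1 - p)"
      by (intro prod.cong) (auto simp: bT bF)
    also have "\<dots> = p * (\<Prod>v\<in>U - {u}. if v = u then p else 1 - p)"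
      using U u by (subst prod.remove[of U u]) auto
    also have "(\<Prod>v\<in>U - {u}. if v = u then p else 1 - p) = (\<Prod>v\<in>U - {u}. 1 - p)"
      by (intro prod.cong) auto
    also have "\<dots> = (1 - p) ^ (card U - 1)" using U u by simp
    finally show ?thesis .
  qed
  have disj: "disjoint_family_on E U"
    unfolding disjoint_family_on_def E_def by (auto simp: Pi_def)
  have "card U * p * (1 - p) ^ (card U - 1) = (\<Sum>u\<in>U. measure_pmf.prob ?M (E u))"
    using pE by simp
  also have "\<dots> = measure_pmf.prob ?M (\<Union>u\<in>U. E u)"
    by (rule measure_pmf.finite_measure_finite_Union[symmetric]) (use U disj in auto)
  also have "\<dots> \<le> measure_pmf.prob ?M {F. receives_some P alpha noise beta eps pos {u \<in> U. F u} s}"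
    by (rule measure_pmf.finite_measure_mono[OF sub]) simp
  finally show ?thesis .
qed

lemma single_receives:
  assumes P: "P > 0" and al: "alpha > 2" and no: "noise > 0" and be: "beta \<ge> 1"
    and e: "0 < eps" "eps < 1" and us: "u \<noteq> s" and pd: "pos u \<noteq> pos s"
    and d: "dist (pos u) (pos s) \<le> (1 - eps) * sinr_range P alpha noise beta"
  shows "receives_some P alpha noise beta eps pos {u} s"
proof -
  define D where "D = dist (pos u) (pos s)"
  define r where "r = sinr_range P alpha noise beta"
  have D0: "D > 0" using pd by (simp add: D_def)
  have r0: "r \<ge> 0" by (simp add: r_def sinr_range_def)
  have Dr: "D \<le> r" using d e r0 unfolding D_def[symmetric] r_def[symmetric]
    by (smt (verit) mult_left_le_one_le)
  have "D powr alpha \<le> r powr alpha"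
    using Dr D0 al by (intro powr_mono2) auto
  also have "r powr alpha = P / (noise * beta)"
    unfolding r_def sinr_range_def using P no be al by (simp add: powr_powr)
  finally have Da: "D powr alpha \<le> P / (noise * beta)" .
  have pos: "D powr alpha > 0" using D0 by simp
  have "beta * noise * D powr alpha \<le> P"
    using Da no be by (simp add: field_simps)
  then have "P * D powr (- alpha) / noise \<ge> beta"
    using pos no by (simp add: powr_minus field_simps)
  then show ?thesis
    unfolding receives_some_def sinr_receives_def
    using us d by (simp add: D_def)
qed

lemma one_minus_inv_pow:
  assumes m: "m \<ge> (1::nat)"
  shows "(1 - 1 / real m) ^ (m - 1) \<ge> 1 / 3"
proof (cases "m = 1")
  case True then show ?thesis by simp
next
  case False
  define k where "k = m - 1"
  have k: "k \<ge> 1" "m = k + 1" using m False by (auto simp: k_def)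
  have "(1 + 1 / real k) ^ k \<le> exp 1"
    using exp_ge_one_plus_x_over_n_power_n[where x=1 and n=k] k(1) by simp
  also have "\<dots> \<le> 3" by (rule exp_le)
  finally have le3: "(1 + 1 / real k) ^ k \<le> 3" .
  have pos: "(1 + 1 / real k) ^ k > 0" using k by (intro zero_less_power) (auto intro: add_pos_nonneg)
  have eq: "1 - 1 / real m = 1 / (1 + 1 / real k)" using k by (simp add: field_simps)
  have "(1 - 1 / real m) ^ (m - 1) = 1 / (1 + 1 / real k) ^ k"
    unfolding eq k_def[symmetric] by (simp add: power_one_over)
  also have "\<dots> \<ge> 1 / 3" using le3 pos by (simp add: field_simps)
  finally show ?thesis .
qed

lemma exactly_one_bound:
  fixes p :: real
  assumes m: "m \<ge> (1::nat)" and p1: "1 / (2 * real m) \<le> p" and p2: "p \<le> 1 / real m"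
  shows "real m * p * (1 - p) ^ (m - 1) \<ge> 1 / 6"
proof -
  have mp: "real m * p \<ge> 1 / 2" using p1 m by (simp add: field_simps)
  have "(1 - p) ^ (m - 1) \<ge> (1 - 1 / real m) ^ (m - 1)"
    using p2 m by (intro power_mono) (auto simp: field_simps)
  then have "(1 - p) ^ (m - 1) \<ge> 1 / 3" using one_minus_inv_pow[OF m] by linarith
  then have "real m * p * (1 - p) ^ (m - 1) \<ge> 1 / 2 * (1 / 3)"
    using mp by (intro mult_mono) auto
  then show ?thesis by simp
qed

lemma binom_low_tail:
  fixes q c \<delta> :: real
  assumes n: "n > 0" and q: "q \<in> {0..1}" and qc: "q \<ge> c + \<delta>" and d: "\<delta> \<ge> 0"
  shows "measure_pmf.prob (binomial_pmf n q) {k. real k < c * n} \<le> exp (-2 * n * \<delta>\<^sup>2)"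
proof -
  interpret binomial_distribution n q by unfold_locales (use q in auto)
  have sub: "{k. real k < c * n} \<subseteq> {x. real x / real n \<le> q - \<delta>}"
  proof
    fix k assume "k \<in> {k. real k < c * n}"
    then have "real k / real n < c" using n by (simp add: field_simps)
    then show "k \<in> {x. real x / real n \<le> q - \<delta>}" using qc by simp
  qed
  have "measure_pmf.prob (binomial_pmf n q) {k. real k < c * n}
     \<le> measure_pmf.prob (binomial_pmf n q) {x. real x / real n \<le> q - \<delta>}"
    by (rule measure_pmf.finite_measure_mono[OF sub]) simp
  also have "\<dots> \<le> exp (real_of_int (- 2 * int n) * \<delta>\<^sup>2)" by (rule prob_le'[OF n d])
  finally show ?thesis by simp
qed

lemma binom_high_tail:
  fixes q c \<delta> :: real
  assumes n: "n > 0" and q: "q \<in> {0..1}" and qc: "q + \<delta> \<le> c" and d: "\<delta> \<ge> 0"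
  shows "measure_pmf.prob (binomial_pmf n q) {k. real k \<ge> c * n} \<le> exp (-2 * n * \<delta>\<^sup>2)"
proof -
  interpret binomial_distribution n q by unfold_locales (use q in auto)
  have sub: "{k. real k \<ge> c * n} \<subseteq> {x. real x / real n \<ge> q + \<delta>}"
  proof
    fix k assume "k \<in> {k. real k \<ge> c * n}"
    then have "real k / real n \<ge> c" using n by (simp add: field_simps)
    then show "k \<in> {x. real x / real n \<ge> q + \<delta>}" using qc by simp
  qed
  have "measure_pmf.prob (binomial_pmf n q) {k. real k \<ge> c * n}
     \<le> measure_pmf.prob (binomial_pmf n q) {x. real x / real n \<ge> q + \<delta>}"
    by (rule measure_pmf.finite_measure_mono[OF sub]) simp
  also have "\<dots> \<le> exp (real_of_int (- 2 * int n) * \<delta>\<^sup>2)" by (rule prob_ge'[OF n d])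
  finally show ?thesis by simp
qed

lemma exists_i0:
  assumes m: "m \<ge> (1::nat)" and mL: "m < 2 ^ L"
  shows "\<exists>i. 1 \<le> i \<and> i \<le> L \<and> m \<le> 2 ^ i \<and> 2 ^ i \<le> 2 * m"
proof (intro exI conjI)
  let ?i = "Suc (floor_log m)"
  show "1 \<le> ?i" by simp
  have a: "2 ^ floor_log m \<le> m" using m floor_log_exp2_le by auto
  have b: "m < 2 * 2 ^ floor_log m" by (rule floor_log_exp2_gt)
  show "m \<le> 2 ^ ?i" using b by simp
  show "2 ^ ?i \<le> 2 * m" using a by simp
  have "2 ^ floor_log m < (2::nat) ^ L" using a mL by linarith
  then have "floor_log m < L" using power_less_imp_less_exp[of 2] by simp
  then show "?i \<le> L" by simp
qed

theorem lemma1: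
  fixes d'' :: real
  assumes "d'' \<ge> 1"
  shows "\<exists>(d::nat) (eps'::real). d > 0 \<and> 0 < eps' \<and> eps' < 1 \<and>
    (\<forall>(P::real) (alpha::real) (noise::real) (beta::real) (eps::real)
       (N::nat) (L::nat) (V::nat set) (pos :: nat \<Rightarrow> real^2) (s::nat) (U::nat set).
       P > 0 \<longrightarrow> alpha > 2 \<longrightarrow> noise > 0 \<longrightarrow> beta \<ge> 1 \<longrightarrow> 0 < eps \<longrightarrow> eps < 1 \<longrightarrow>
       N = 2 ^ L \<longrightarrow> V \<subseteq> {1..N} \<longrightarrow> inj_on pos V \<longrightarrow>
       s \<in> V \<longrightarrow> U \<subseteq> V \<longrightarrow> U \<noteq> {} \<longrightarrow>
       (\<forall>u\<in>U. u \<noteq> s \<and> dist (pos u) (pos s) \<le> (1 - eps) * sinr_range P alpha noise beta) \<longrightarrow>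
       measure_pmf.prob (esun_coins L d U)
         {omega. \<exists>x. esun_estimate P alpha noise beta eps pos L d eps' U s omega = Some x
                      \<and> card U \<le> x \<and> x \<le> 16 * card U}
       \<ge> 1 - real (card V) powr (- d''))"
proof -
  define d :: nat where "d = nat \<lceil>512 * (1 + d'')\<rceil>"
  have dge: "real d \<ge> 512 * (1 + d'')" unfolding d_def by linarith
  have "real d > 0" using dge assms by (smt (verit))
  then have dpos: "d > 0" by simp
  show ?thesis
  proof (intro exI[of _ d] exI[of _ "1/4::real"] conjI allI impI)
    fix P alpha noise beta eps :: real and N L :: nat and V :: "nat set"
      and pos :: "nat \<Rightarrow> real^2" and s :: nat and U :: "nat set"
    assume P: "P > 0" and al: "alpha > 2" and no: "noise > 0" and be: "beta \<ge> 1"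
      and e0: "0 < eps" and e1: "eps < 1" and N: "N = 2 ^ L" and VN: "V \<subseteq> {1..N}"
      and inj: "inj_on pos V" and sV: "s \<in> V" and UV: "U \<subseteq> V" and Une: "U \<noteq> {}"
      and nb: "\<forall>u\<in>U. u \<noteq> s \<and> dist (pos u) (pos s) \<le> (1 - eps) * sinr_range P alpha noise beta"
    have finV: "finite V" using finite_subset[OF VN] by simp
    have finU: "finite U" using finite_subset[OF UV finV] by simp
    have sU: "s \<notin> U" using nb by auto
    define m where "m = card U"
    have m1: "m \<ge> 1" using Une finU by (simp add: m_def Suc_le_eq card_gt_0_iff)
    have UVs: "U \<subseteq> V - {s}" using UV sU by auto
    have "card U \<le> card (V - {s})" using UVs finV by (intro card_mono) auto
    then have mV: "m < card V" using sV finV m1 by (simp add: m_def)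
    have VleN: "card V \<le> N" using card_mono[OF _ VN] by simp
    have mL: "m < 2 ^ L" using mV VleN N by simp
    have L1: "L \<ge> 1" using mL m1 by (cases L) auto
    define n where "n = d * L"
    have npos: "n > 0" using L1 dpos by (simp add: n_def)
    have one: "receives_some P alpha noise beta eps pos {u} s" if "u \<in> U" for u
    proof -
      have "pos u \<noteq> pos s" using inj that UV sV nb by (metis inj_on_contraD subsetD)
      then show ?thesis using single_receives[OF P al no be e0 e1] nb that by blast
    qed
    define q where "q i = succ_prob P alpha noise beta eps pos U s i" for i
    define cnt where "cnt \<omega> i = esun_count P alpha noise beta eps pos L d U s \<omega> i" for \<omega> i
    let ?M = "esun_coins L d U"
    have q01: "q i \<in> {0..1}" for i by (simp add: q_def succ_prob_def)
    have transfer: "measure_pmf.prob ?M {\<omega>. Pr (real (cnt \<omega> i))}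
        = measure_pmf.prob (binomial_pmf n (q i)) {k. Pr (real k)}" if "i \<in> {1..L}" for i Pr
    proof -
      have "measure_pmf.prob (binomial_pmf n (q i)) {k. Pr (real k)}
          = measure_pmf.prob (map_pmf (\<lambda>\<omega>. cnt \<omega> i) ?M) {k. Pr (real k)}"
        unfolding cnt_def q_def n_def esun_count_binomial[OF that finU] ..
      also have "\<dots> = measure_pmf.prob ?M {\<omega>. Pr (real (cnt \<omega> i))}"
        by (simp add: vimage_def)
      finally show ?thesis ..
    qed
    obtain i0 where i0: "1 \<le> i0" "i0 \<le> L" "m \<le> 2 ^ i0" "2 ^ i0 \<le> 2 * m"
      using exists_i0[OF m1 mL] by blast
    have qi0: "q i0 \<ge> 1 / 6"
    proof -
      have p1: "1 / (2 * real m) \<le> 1 / 2 ^ i0"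
        using i0(4) m1 by (simp add: field_simps) (metis of_nat_le_iff of_nat_mult of_nat_numeral of_nat_power)
      have p2: "(1::real) / 2 ^ i0 \<le> 1 / real m"
        using i0(3) m1 by (simp add: field_simps)
      have "q i0 \<ge> real (card U) * (1 / 2 ^ i0) * (1 - 1 / 2 ^ i0) ^ (card U - 1)"
        unfolding q_def succ_prob_def
        by (rule succ_prob_lower[OF finU _ one]) auto
      moreover have "real m * (1 / 2 ^ i0) * (1 - 1 / 2 ^ i0) ^ (m - 1) \<ge> 1 / 6"
        by (rule exactly_one_bound[OF m1 p1 p2])
      ultimately show ?thesis unfolding m_def by linarith
    qed
    have qhigh: "q i \<le> 1 / 16" if "16 * m < 2 ^ i" for i
    proof -
      have "q i \<le> real (card U) * (1 / 2 ^ i)"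
        unfolding q_def succ_prob_def by (rule succ_prob_upper[OF finU]) auto
      also have "\<dots> \<le> 1 / 16"
        using that by (simp add: m_def field_simps) (metis of_nat_le_iff of_nat_mult of_nat_numeral of_nat_power less_imp_le)
      finally show ?thesis .
    qed
    define B where "B = {i \<in> {1..L}. 16 * m < 2 ^ i}"
    have i0B: "i0 \<notin> B" using i0 m1 by (auto simp: B_def)
    define X where "X = exp (- 2 * real n * (1/32)\<^sup>2)"
    define F where "F i = (if i = i0 then {\<omega>. real (cnt \<omega> i) < 3/32 * real n}
                          else {\<omega>. real (cnt \<omega> i) \<ge> 3/32 * real n})" for i
    have PF: "measure_pmf.prob ?M (F i) \<le> X" if "i \<in> insert i0 B" for i
    proof (cases "i = i0")
      case True
      have "measure_pmf.prob ?M (F i) = measure_pmf.prob (binomial_pmf n (q i0)) {k. real k < 3/32 * real n}"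
        using True i0 transfer[of i0 "\<lambda>x. x < 3/32 * real n"] by (simp add: F_def)
      also have "\<dots> \<le> X" unfolding X_def
        by (rule binom_low_tail[OF npos q01]) (use qi0 in auto)
      finally show ?thesis .
    next
      case False
      then have iB: "i \<in> B" using that by auto
      then have i1L: "i \<in> {1..L}" by (simp add: B_def)
      have "measure_pmf.prob ?M (F i) = measure_pmf.prob (binomial_pmf n (q i)) {k. real k \<ge> 3/32 * real n}"
        using False transfer[OF i1L, of "\<lambda>x. x \<ge> 3/32 * real n"] by (simp add: F_def)
      also have "\<dots> \<le> X" unfolding X_def
      proof (rule binom_high_tail[OF npos q01])
        have "q i \<le> 1/16" using qhigh[of i] iB unfolding B_def by blast
        then show "q i + 1/32 \<le> 3/32" by linarith
      qed simp
      finally show ?thesis .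
    qed
    have IB: "insert i0 B \<subseteq> {1..L}" using i0 by (auto simp: B_def)
    have finIB: "finite (insert i0 B)" using finite_subset[OF IB] by simp
    have cardIB: "card (insert i0 B) \<le> L" using card_mono[OF _ IB] by simp
    have bad: "measure_pmf.prob ?M (\<Union>i\<in>insert i0 B. F i) \<le> real L * X"
    proof -
      have "measure_pmf.prob ?M (\<Union>i\<in>insert i0 B. F i) \<le> (\<Sum>i\<in>insert i0 B. measure_pmf.prob ?M (F i))"
        by (rule measure_pmf.finite_measure_subadditive_finite) (use finIB in auto)
      also have "\<dots> \<le> (\<Sum>i\<in>insert i0 B. X)" by (rule sum_mono) (rule PF)
      also have "\<dots> \<le> real L * X" using cardIB by (simp add: X_def)
      finally show ?thesis .
    qed
    have goodsub: "UNIV - (\<Union>i\<in>insert i0 B. F i) \<subseteq>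
       {omega. \<exists>x. esun_estimate P alpha noise beta eps pos L d (1/4) U s omega = Some x
                      \<and> card U \<le> x \<and> x \<le> 16 * card U}"
    proof
      fix \<omega> assume "\<omega> \<in> UNIV - (\<Union>i\<in>insert i0 B. F i)"
      then have nF: "\<omega> \<notin> F i" if "i \<in> insert i0 B" for i using that by blast
      have g0: "real (cnt \<omega> i0) \<ge> 3/32 * real n"
        using nF[of i0] by (simp add: F_def not_less)
      have gB: "real (cnt \<omega> i) < 3/32 * real n" if iB: "i \<in> B" for i
      proof -
        have "i \<noteq> i0" using iB i0B by blast
        then show ?thesis using nF[of i] iB by (simp add: F_def not_le)
      qed
      define Q where "Q = {i \<in> {1..L}. real (esun_count P alpha noise beta eps pos L d U s \<omega> i)
                             \<ge> real (d * L) / 8 * (1 - 1/4)}"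
      have thr: "real (d * L) / 8 * (1 - 1/4) = 3/32 * real n" by (simp add: n_def)
      have Qeq: "Q = {i \<in> {1..L}. real (cnt \<omega> i) \<ge> 3/32 * real n}"
        unfolding Q_def thr cnt_def ..
      have i0Q: "i0 \<in> Q" using g0 i0 Qeq by auto
      have finQ: "finite Q" by (simp add: Q_def)
      have QB: "2 ^ i \<le> 16 * m" if iQ: "i \<in> Q" for i
      proof (rule ccontr)
        assume "\<not> 2 ^ i \<le> 16 * m"
        then have "i \<in> B" using iQ unfolding Qeq B_def by auto
        then have "real (cnt \<omega> i) < 3/32 * real n" by (rule gB)
        then show False using iQ unfolding Qeq by auto
      qed
      have Qne: "Q \<noteq> {}" using i0Q by auto
      have est: "esun_estimate P alpha noise beta eps pos L d (1/4) U s \<omega> = Some (2 ^ Max Q)"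
        unfolding esun_estimate_def Let_def Q_def[symmetric] using Qne by simp
      have "i0 \<le> Max Q" using finQ i0Q by simp
      then have "(2::nat) ^ i0 \<le> 2 ^ Max Q" by simp
      then have "m \<le> 2 ^ Max Q" using i0(3) by linarith
      moreover have "2 ^ Max Q \<le> 16 * m" using QB Max_in[OF finQ Qne] by blast
      ultimately show "\<omega> \<in> {omega. \<exists>x. esun_estimate P alpha noise beta eps pos L d (1/4) U s omega = Some x
                      \<and> card U \<le> x \<and> x \<le> 16 * card U}"
        using est by (simp add: m_def)
    qed
    have bound: "real L * X \<le> real (card V) powr (- d'')"
    proof -
      have X0: "X \<ge> 0" by (simp add: X_def)
      have LeL: "real L \<le> exp (real L)" using exp_ge_add_one_self[of "real L"] by linarith
      have "real L * X \<le> exp (real L) * X" using LeL X0 by (rule mult_right_mono)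
      also have "exp (real L) * X = exp (real L - real n / 512)"
      proof -
        have XX: "X = exp (- (real n / 512))"
          unfolding X_def by (intro arg_cong[where f=exp]) (simp add: power2_eq_square)
        show ?thesis unfolding XX by (simp add: exp_add[symmetric])
      qed
      also have "\<dots> \<le> exp (- (real L * d''))"
      proof (rule exp_mono)
        have "real n = real d * real L" by (simp add: n_def)
        then have "real n \<ge> 512 * (1 + d'') * real L" using dge by (simp add: mult_right_mono)
        then have "real n \<ge> 512 * real L + 512 * (real L * d'')" by (simp add: algebra_simps)
        then show "real L - real n / 512 \<le> - (real L * d'')" by linarith
      qed
      also have "\<dots> \<le> exp (- (d'' * (real L * ln 2)))"
      proof (rule exp_mono)
        have "0 \<le> real L * d''" using assms by simp
        then have "ln 2 * (real L * d'') \<le> real L * d''"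
          using ln_2_less_1 ln_gt_zero[of "2::real"] by (intro mult_left_le_one_le) auto
        then show "- (real L * d'') \<le> - (d'' * (real L * ln 2))" by (simp add: algebra_simps)
      qed
      also have "\<dots> = ((2::real) ^ L) powr (- d'')"
        by (simp add: powr_def ln_realpow)
      also have "\<dots> \<le> real (card V) powr (- d'')"
      proof (rule powr_mono2')
        show "- d'' \<le> 0" using assms by simp
        show "0 < real (card V)" using mV by simp
        have "card V \<le> 2 ^ L" using VleN N by simp
        then show "real (card V) \<le> (2::real) ^ L"
          by (metis of_nat_le_iff of_nat_numeral of_nat_power)
      qed
      finally show ?thesis .
    qed
    have "1 - real (card V) powr (- d'') \<le> 1 - measure_pmf.prob ?M (\<Union>i\<in>insert i0 B. F i)"
      using bad bound by linarith
    also have "\<dots> = measure_pmf.prob ?M (UNIV - (\<Union>i\<in>insert i0 B. F i))"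
      using measure_pmf.prob_compl[of "\<Union>i\<in>insert i0 B. F i" ?M] by simp
    also have "\<dots> \<le> measure_pmf.prob ?M {omega. \<exists>x. esun_estimate P alpha noise beta eps pos L d (1/4) U s omega = Some x
                      \<and> card U \<le> x \<and> x \<le> 16 * card U}"
      by (rule measure_pmf.finite_measure_mono[OF goodsub]) simp
    finally show "measure_pmf.prob ?M {omega. \<exists>x. esun_estimate P alpha noise beta eps pos L d (1/4) U s omega = Some x
                      \<and> card U \<le> x \<and> x \<le> 16 * card U} \<ge> 1 - real (card V) powr (- d'')" .
  qed (use dpos in auto)
qed

end
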